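(* Let $a_1,\dots,a_k$ be positive integers with $\gcd(a_1,\dots,a_k)=1$, let $\mathit{NR}$ be the (finite) set of positive integers that are not representable, and let $a$ be one of the $a_i$. Let $\mathcal{N}$ be the set of positive integers $n$ such that $n$ is representable and $n-a$ is not representable. Then for every function $f:\mathbb{Z}\to\mathbb{C}$, \[ \sum_{n\in\mathit{NR}}\bigl[f(n+a)-f(n)\bigr]=\sum_{n\in\mathcal{N}}f(n)-\sum_{n=1}^{a-1}f(n). \]
   Context: An integer $n$ is called representable (with respect to $a_1,\dots,a_k$) if $n=\sum_{i=1}^k a_ix_i$ for some nonnegative integers $x_1,\dots,x_k$; in particular $0$ is representable and negative integers are not. *)

theory Defs
  imports Complex_Main
begin

definition representable :: "nat list \<Rightarrow> int \<Rightarrow> bool" where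
  "representable as n \<longleftrightarrow>
     (\<exists>x :: nat list. length x = length as \<and>
        n = (\<Sum>i<length as. int (as ! i) * int (x ! i)))"

definition NR :: "nat list \<Rightarrow> int set" where
  "NR as = {n. n > 0 \<and> \<not> representable as n}"

end

theory Submission
  imports Defs
begin

inductive_set SG :: "nat set \<Rightarrow> int set" for A where
  SG0: "0 \<in> SG A"
| SGs: "x \<in> SG A \<Longrightarrow> b \<in> A \<Longrightarrow> x + int b \<in> SG A"

lemma SG_add: "y \<in> SG A \<Longrightarrow> x \<in> SG A \<Longrightarrow> x + y \<in> SG A"
proof (induction y rule: SG.induct)
  case SG0 then show ?case by simp
next
  case (SGs y b)
  then have "x + y + int b \<in> SG A" by (intro SG.SGs) auto
  then show ?case by (simp add: add.assoc)
qed

lemma SG_gen_mult: "b \<in> A \<Longrightarrow> int b * int c \<in> SG A"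
proof (induction c)
  case 0 then show ?case by (simp add: SG.SG0)
next
  case (Suc c)
  then have "int b * int c + int b \<in> SG A" by (intro SG.SGs)
  then show ?case by (simp add: algebra_simps)
qed

lemma SG_nat_mult: "x \<in> SG A \<Longrightarrow> int k * x \<in> SG A"
proof (induction k)
  case 0 then show ?case by (simp add: SG.SG0)
next
  case (Suc k)
  then have "int k * x + x \<in> SG A" using SG_add by blast
  then show ?case by (simp add: algebra_simps)
qed

lemma SG_nonneg: "x \<in> SG A \<Longrightarrow> x \<ge> 0"
  by (induction rule: SG.induct) auto

lemma rep_imp_SG:
  assumes "representable as n" shows "n \<in> SG (set as)"
proof -
  obtain x :: "nat list" where lx: "length x = length as"
    and n: "n = (\<Sum>i<length as. int (as ! i) * int (x ! i))"
    using assms unfolding representable_def by blast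
  have "m \<le> length as \<Longrightarrow> (\<Sum>i<m. int (as ! i) * int (x ! i)) \<in> SG (set as)" for m
  proof (induction m)
    case 0 then show ?case by (simp add: SG.SG0)
  next
    case (Suc m)
    have "int (as ! m) * int (x ! m) \<in> SG (set as)"
      using Suc.prems by (intro SG_gen_mult) auto
    then show ?case using Suc SG_add by auto
  qed
  then show ?thesis using n by simp
qed

lemma SG_imp_rep:
  assumes "n \<in> SG (set as)" shows "representable as n"
  using assms
proof (induction rule: SG.induct)
  case SG0
  show ?case unfolding representable_def
    by (rule exI[of _ "replicate (length as) 0"]) simp
next
  case (SGs y b)
  obtain x :: "nat list" where lx: "length x = length as"
    and n: "y = (\<Sum>i<length as. int (as ! i) * int (x ! i))"
    using SGs.IH unfolding representable_def by blast
  obtain j where j: "j < length as" "as ! j = b" using SGs.hyps(2) by (metis in_set_conv_nth)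
  define x' where "x' = x[j := x ! j + 1]"
  have "(\<Sum>i<length as. int (as ! i) * int (x' ! i))
      = (\<Sum>i<length as. int (as ! i) * int (x ! i) + (if i = j then int b else 0))"
    by (rule sum.cong) (auto simp: x'_def lx j algebra_simps)
  also have "\<dots> = y + int b" using j by (simp add: sum.distrib n)
  finally show ?case unfolding representable_def
    by (intro exI[of _ x']) (auto simp: x'_def lx)
qed

lemma rep_iff: "representable as n \<longleftrightarrow> n \<in> SG (set as)"
  using rep_imp_SG SG_imp_rep by blast

inductive_set ZG :: "nat set \<Rightarrow> int set" for A where
  ZG0: "0 \<in> ZG A"
| ZGp: "x \<in> ZG A \<Longrightarrow> b \<in> A \<Longrightarrow> x + int b \<in> ZG A"
| ZGm: "x \<in> ZG A \<Longrightarrow> b \<in> A \<Longrightarrow> x - int b \<in> ZG A"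

lemma ZG_add: "y \<in> ZG A \<Longrightarrow> x \<in> ZG A \<Longrightarrow> x + y \<in> ZG A"
proof (induction y rule: ZG.induct)
  case ZG0 then show ?case by simp
next
  case (ZGp y b)
  then have "x + y + int b \<in> ZG A" by (intro ZG.ZGp) auto
  then show ?case by (simp add: add.assoc)
next
  case (ZGm y b)
  then have "x + y - int b \<in> ZG A" by (intro ZG.ZGm) auto
  then show ?case by (simp add: algebra_simps)
qed

lemma ZG_neg: "x \<in> ZG A \<Longrightarrow> - x \<in> ZG A"
proof (induction x rule: ZG.induct)
  case ZG0 then show ?case by (simp add: ZG.ZG0)
next
  case (ZGp y b)
  then have "- y - int b \<in> ZG A" by (intro ZG.ZGm) auto
  then show ?case by simp
next
  case (ZGm y b)
  then have "- y + int b \<in> ZG A" by (intro ZG.ZGp) auto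
  then show ?case by simp
qed

lemma ZG_nat_mult: "x \<in> ZG A \<Longrightarrow> int k * x \<in> ZG A"
proof (induction k)
  case 0 then show ?case by (simp add: ZG.ZG0)
next
  case (Suc k)
  then have "int k * x + x \<in> ZG A" using ZG_add by blast
  then show ?case by (simp add: algebra_simps)
qed

lemma ZG_int_mult: "x \<in> ZG A \<Longrightarrow> u * x \<in> ZG A"
proof (cases "u \<ge> 0")
  case True
  assume x: "x \<in> ZG A"
  have "int (nat u) * x \<in> ZG A" by (rule ZG_nat_mult[OF x])
  then show ?thesis using True by simp
next
  case False
  assume x: "x \<in> ZG A"
  have "- (int (nat (-u)) * x) \<in> ZG A" by (rule ZG_neg[OF ZG_nat_mult[OF x]])
  then show ?thesis using False by simp
qed

lemma ZG_mono: "x \<in> ZG A \<Longrightarrow> A \<subseteq> B \<Longrightarrow> x \<in> ZG B"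
  by (induction rule: ZG.induct) (auto intro: ZG.intros)

lemma ZG_gen: "b \<in> A \<Longrightarrow> int b \<in> ZG A"
  using ZG.ZGp[OF ZG.ZG0] by simp

lemma Gcd_in_ZG: "int (Gcd (set xs)) \<in> ZG (set xs)"
proof (induction xs)
  case Nil then show ?case by (simp add: ZG.ZG0)
next
  case (Cons b bs)
  obtain u v where uv: "u * int b + v * int (Gcd (set bs)) = gcd (int b) (int (Gcd (set bs)))"
    using bezout_int by blast
  have g: "int (Gcd (set (b # bs))) = gcd (int b) (int (Gcd (set bs)))"
    by (simp add: gcd_int_def)
  have "int b \<in> ZG (set (b # bs))" by (rule ZG_gen) simp
  moreover have "int (Gcd (set bs)) \<in> ZG (set (b # bs))"
    using Cons.IH by (rule ZG_mono) auto
  ultimately have "u * int b + v * int (Gcd (set bs)) \<in> ZG (set (b # bs))"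
    by (intro ZG_add ZG_int_mult)
  then show ?case using uv g by simp
qed

lemma ZG_diff: "x \<in> ZG A \<Longrightarrow> \<exists>P Q. P \<in> SG A \<and> Q \<in> SG A \<and> x = P - Q"
proof (induction rule: ZG.induct)
  case ZG0 then show ?case using SG.SG0 by force
next
  case (ZGp x b)
  then obtain P Q where "P \<in> SG A" "Q \<in> SG A" "x = P - Q" by blast
  then show ?case using ZGp.hyps(2)
    by (intro exI[of _ "P + int b"] exI[of _ Q]) (auto intro: SG.SGs)
next
  case (ZGm x b)
  then obtain P Q where "P \<in> SG A" "Q \<in> SG A" "x = P - Q" by blast
  then show ?case using ZGm.hyps(2)
    by (intro exI[of _ P] exI[of _ "Q + int b"]) (auto intro: SG.SGs)
qed

lemma SG_large:
  assumes P: "P \<in> SG A" and Q: "Q \<in> SG A" and PQ: "P = Q + 1" and aA: "a \<in> A" and apos: "a > 0"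
    and n: "n \<ge> (int a - 1) * (Q + 1)"
  shows "n \<in> SG A"
proof -
  define r where "r = (n - (int a - 1) * Q) mod int a"
  define t where "t = (n - (int a - 1) * Q - r) div int a"
  have r0: "0 \<le> r" "r < int a" using apos by (auto simp: r_def)
  have dv: "int a dvd (n - (int a - 1) * Q - r)"
    unfolding r_def by (rule dvd_minus_mod)
  have te: "t * int a = n - (int a - 1) * Q - r" using dv unfolding t_def by (rule dvd_div_mult_self)
  have Q0: "Q \<ge> 0" using Q SG_nonneg by blast
  have "n - (int a - 1) * Q - r \<ge> 0"
  proof -
    have "(int a - 1) * (Q + 1) = (int a - 1) * Q + (int a - 1)" by (simp add: algebra_simps)
    then show ?thesis using n r0 by linarith
  qed
  then have "t * int a \<ge> 0" using te by simp
  then have t0: "t \<ge> 0" using apos by (simp add: zero_le_mult_iff)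
  have n_eq: "n = int (nat t) * int a + int (nat r) * P + int (nat (int a - 1 - r)) * Q"
  proof -
    have "int (nat t) = t" "int (nat r) = r" "int (nat (int a - 1 - r)) = int a - 1 - r"
      using t0 r0 by auto
    moreover have "n = t * int a + r * P + (int a - 1 - r) * Q"
      using te PQ by (simp add: algebra_simps)
    ultimately show ?thesis by presburger
  qed
  have "int (nat t) * int a \<in> SG A"
    using SG_nat_mult[OF SG.SGs[OF SG.SG0 aA], of "nat t"] by simp
  moreover have "int (nat r) * P \<in> SG A" by (rule SG_nat_mult[OF P])
  moreover have "int (nat (int a - 1 - r)) * Q \<in> SG A" by (rule SG_nat_mult[OF Q])
  ultimately show ?thesis unfolding n_eq by (intro SG_add)
qed

lemma NR_finite:
  assumes pos: "\<forall>i\<in>set as. i > 0" and gcd: "Gcd (set as) = 1" and a_in: "a \<in> set as"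
  shows "finite (NR as)"
proof -
  have "1 \<in> ZG (set as)" using Gcd_in_ZG[of as] gcd by simp
  then obtain P Q where P: "P \<in> SG (set as)" and Q: "Q \<in> SG (set as)" and PQ: "1 = P - Q"
    using ZG_diff by blast
  have "NR as \<subseteq> {0..(int a - 1) * (Q + 1)}"
  proof
    fix n assume "n \<in> NR as"
    then have "n > 0" "n \<notin> SG (set as)" by (auto simp: NR_def rep_iff)
    then have "\<not> n \<ge> (int a - 1) * (Q + 1)"
      using SG_large[OF P Q _ a_in] PQ pos a_in by auto
    then show "n \<in> {0..(int a - 1) * (Q + 1)}" using \<open>n > 0\<close> by auto
  qed
  then show ?thesis using finite_subset by blast
qed

theorem theorem1:
  fixes as :: "nat list" and a :: nat and f :: "int \<Rightarrow> complex"
  assumes pos: "\<forall>i\<in>set as. i > 0"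
    and gcd: "Gcd (set as) = 1"
    and a_in: "a \<in> set as"
  shows "(\<Sum>n\<in>NR as. f (n + int a) - f n) =
         (\<Sum>n\<in>{n. n > 0 \<and> representable as n \<and> \<not> representable as (n - int a)}. f n)
         - (\<Sum>n=1..int a - 1. f n)"
proof -
  define A where "A = NR as"
  define N where "N = {n. n > 0 \<and> representable as n \<and> \<not> representable as (n - int a)}"
  define I where "I = {1..int a - 1}"
  define B where "B = (\<lambda>n. n + int a) ` A"
  have fA: "finite A" using NR_finite[OF pos gcd a_in] by (simp add: A_def)
  have fB: "finite B" using fA by (simp add: B_def)
  have fI: "finite I" by (simp add: I_def)
  have R0: "representable as 0" by (simp add: rep_iff SG.SG0)
  have Ra: "representable as (int a)" using SG.SGs[OF SG.SG0 a_in] by (simp add: rep_iff)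
  have Radd: "representable as x \<Longrightarrow> representable as (x + int a)" for x
    using SG.SGs a_in by (simp add: rep_iff)
  have Rneg: "x < 0 \<Longrightarrow> \<not> representable as x" for x
    using SG_nonneg by (force simp: rep_iff)
  have eq: "B \<union> I = N \<union> A"
  proof (intro set_eqI iffI)
    fix m assume "m \<in> B \<union> I"
    then show "m \<in> N \<union> A"
    proof
      assume "m \<in> B"
      then have "m - int a > 0" "\<not> representable as (m - int a)"
        by (auto simp: B_def A_def NR_def)
      then show ?thesis by (auto simp: N_def A_def NR_def)
    next
      assume "m \<in> I"
      then show ?thesis using Rneg[of "m - int a"] by (auto simp: I_def N_def A_def NR_def)
    qed
  next
    fix m assume m: "m \<in> N \<union> A"
    then have m0: "m > 0" by (auto simp: N_def A_def NR_def)
    show "m \<in> B \<union> I"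
    proof (cases "m < int a")
      case True then show ?thesis using m0 by (simp add: I_def)
    next
      case False
      have "\<not> representable as (m - int a)"
      proof
        assume "representable as (m - int a)"
        then have "representable as m" using Radd[of "m - int a"] by simp
        with m \<open>representable as (m - int a)\<close> show False by (auto simp: N_def A_def NR_def)
      qed
      moreover have "m \<noteq> int a" using \<open>\<not> representable as (m - int a)\<close> R0 by auto
      ultimately have "m - int a \<in> A" using False by (auto simp: A_def NR_def)
      then have "m \<in> B" unfolding B_def by (rule rev_image_eqI) simp
      then show ?thesis by simp
    qed
  qed
  have fN: "finite N" using eq fB fI by (metis finite_Un)
  have d1: "B \<inter> I = {}" by (auto simp: B_def I_def A_def NR_def)
  have d2: "N \<inter> A = {}" by (auto simp: N_def A_def NR_def)
  have "sum f B + sum f I = sum f N + sum f A"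
    using sum.union_disjoint[OF fB fI d1, of f] sum.union_disjoint[OF fN fA d2, of f] eq by simp
  moreover have "sum f B = (\<Sum>n\<in>A. f (n + int a))"
    unfolding B_def by (subst sum.reindex) (auto simp: inj_on_def)
  ultimately show ?thesis
    by (simp add: sum_subtractf A_def[symmetric] N_def[symmetric] I_def[symmetric] algebra_simps)
qed

end
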